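(* Let $n>1$ be an integer and $a$ an indeterminate. Then $$ \sum_{k=0}^{n-1}[4k-1]_{q^2}[4k-1]^2\frac{(q^{-2};q^4)_k^2(q^{-2}/a;q^4)_k(aq^{-2};q^4)_k} {(q^4;q^4)_k^2(q^4/a;q^4)_k(aq^4;q^4)_k}q^{4k} =q(q^{2n}+1)^2[n]_{q^2}^2{2n\brack n}_{q^2}^2 \frac{(1-q^{-2})^2(q^6/a;q^4)_{n-2}(aq^6;q^4)_{n-2}\,f_n(a,q)} {(1-q^{4n-2})^2(-q^2;q^2)_n^4(aq^4;q^4)_{n-1}(q^4/a;q^4)_{n-1}}, $$ where $$ \begin{aligned} f_n(a,q)&=2+2\sum_{i=1}^{4n-6}i\,(q^i+q^{8n-6-i}) -\frac{(a^2+1)(q^{8n-5}-2q^{4n-1}+2q^{4n-2}-2q^{4n-3}+q)}{a(q-1)^2}\\ &\quad+(8n-10)q^{4n-4}(1+q^2)+(8n-11)q^{4n-5}(1+q^4)+(8n-8)q^{4n-3}+2q^{8n-6}. \end{aligned} $$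
   Context: $q$ is an indeterminate. For an integer $m$, $[m]=[m]_q=(1-q^m)/(1-q)$ and $[m]_{q^2}=(1-q^{2m})/(1-q^2)$. The $q$-shifted factorial is $(x;q)_0=1$ and $(x;q)_k=(1-x)(1-xq)\cdots(1-xq^{k-1})$ for $k\ge1$. The $q$-binomial coefficient is ${N\brack k}_q=\frac{(q;q)_N}{(q;q)_k(q;q)_{N-k}}$ for $0\le k\le N$ and $0$ otherwise; ${N\brack k}_{q^2}$ is the same with $q$ replaced by $q^2$. The identity is an identity of rational functions in $q$ and $a$. *)

theory Defs
  imports Main
begin

definition qpoch :: "'a::field \<Rightarrow> 'a \<Rightarrow> nat \<Rightarrow> 'a" where
  "qpoch x q k = (\<Prod>i<k. (1 - x * q ^ i))"

definition qint :: "'a::field \<Rightarrow> int \<Rightarrow> 'a" where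
  "qint q m = (1 - q powi m) / (1 - q)"

definition qbinom :: "'a::field \<Rightarrow> nat \<Rightarrow> nat \<Rightarrow> 'a" where
  "qbinom q N k = (if k \<le> N then qpoch q q N / (qpoch q q k * qpoch q q (N - k)) else 0)"

definition fpoly :: "nat \<Rightarrow> 'a::field \<Rightarrow> 'a \<Rightarrow> 'a" where
  "fpoly n a q =
     2 + 2 * (\<Sum>i = 1..4*n-6. of_nat i * (q ^ i + q ^ (8*n-6-i)))
     - (a^2 + 1) * (q ^ (8*n-5) - 2 * q ^ (4*n-1) + 2 * q ^ (4*n-2) - 2 * q ^ (4*n-3) + q)
         / (a * (q - 1)^2)
     + of_nat (8*n-10) * q ^ (4*n-4) * (1 + q^2)
     + of_nat (8*n-11) * q ^ (4*n-5) * (1 + q^4)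
     + of_nat (8*n-8) * q ^ (4*n-3)
     + 2 * q ^ (8*n-6)"

end

theory Submission
  imports Defs
begin



lemma qpoch_Suc: "qpoch x q (Suc k) = qpoch x q k * (1 - x*q^k)"
  by (simp add: qpoch_def)

lemma sum_ipow: "(1-x)^2 * (\<Sum>i=1..m. of_nat i * x^i) = x - of_nat (m+1) * x^(m+1) + of_nat m * (x::'a::field)^(m+2)"
proof (induction m)
  case 0 then show ?case by (simp add: power2_eq_square algebra_simps)
next
  case (Suc m)
  have "(1-x)^2 * (\<Sum>i=1..Suc m. of_nat i * x^i) = (1-x)^2 * (\<Sum>i=1..m. of_nat i * x^i) + (1-x)^2 * (of_nat (Suc m) * x^(Suc m))"
    by (simp add: algebra_simps)
  also have "\<dots> = x - of_nat (m+1) * x^(m+1) + of_nat m * x^(m+2) + (1-x)^2 * (of_nat (Suc m) * x^(Suc m))"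
    using Suc by simp
  also have "\<dots> = x - of_nat (Suc m+1) * x^(Suc m+1) + of_nat (Suc m) * x^(Suc m+2)"
    by (simp add: power2_eq_square algebra_simps)
  finally show ?case .
qed




definition Gp :: "'a::field \<Rightarrow> 'a \<Rightarrow> 'a \<Rightarrow> 'a \<Rightarrow> 'a" where
"Gp q a X N = 2*a*q^6*(1-q)^2 + 2*a*q*(q^6-(4*N-5)*X+(4*N-6)*X*q) + 2*a*q*X*(X-(4*N-5)*q^6+(4*N-6)*q^5)
     - (a*a+1)*q*(X^2-2*X*q^4+2*X*q^3-2*X*q^2+q^6) + (8*N-10)*a*X*q^2*(1+q^2)*(1-q)^2
     + (8*N-11)*a*X*q*(1+q^4)*(1-q)^2 + (8*N-8)*a*X*q^3*(1-q)^2 + 2*a*X^2*(1-q)^2"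

lemma fpoly_alg:
  fixes q a X N :: "'a::field"
  assumes "q \<noteq> 0" "a \<noteq> 0" "X \<noteq> 0" "q \<noteq> 1"
  shows "2 + 2*((q - (4*N-5)*(X/q^5) + (4*N-6)*(X/q^4))/(1-q)^2
        + X^2/q^6 * ((inverse q - (4*N-5)*(q^5/X) + (4*N-6)*(q^4/X))/(1-inverse q)^2))
     - (a^2+1)*(X^2/q^5 - 2*(X/q) + 2*(X/q^2) - 2*(X/q^3) + q)/(a*(q-1)^2)
     + (8*N-10)*(X/q^4)*(1+q^2) + (8*N-11)*(X/q^5)*(1+q^4) + (8*N-8)*(X/q^3) + 2*(X^2/q^6)
   = Gp q a X N / (a*q^6*(1-q)^2)"
proof -
  have h: "1 - q \<noteq> 0" "q - 1 \<noteq> 0" "1 - inverse q \<noteq> 0" using assms by (auto simp: field_simps)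
  show ?thesis using assms h unfolding Gp_def
    by (simp add: field_simps) algebra
qed




lemma pow_diff': "q \<noteq> 0 \<Longrightarrow> k \<le> M \<Longrightarrow> (q::'a::field)^(M-k) = q^M / q^k"
  by (simp add: power_diff)

lemma fpoly_closed:
  fixes q a :: "'a::field_char_0"
  assumes "q \<noteq> 0" "a \<noteq> 0" "q \<noteq> 1" "n \<ge> 2"
  shows "fpoly n a q = Gp q a (q^(4*n)) (of_nat n) / (a*q^6*(1-q)^2)"
proof -
  define X where "X = q^(4*n)"
  define N where "N = (of_nat n :: 'a)"
  define m where "m = 4*n-6"
  have X0: "X \<noteq> 0" using assms by (simp add: X_def)
  have q1: "1 - q \<noteq> 0" "1 - inverse q \<noteq> 0" using assms by (auto simp: field_simps)
  have X2: "q^(8*n) = X^2" by (simp add: X_def power_mult[symmetric] mult.commute)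
  have s1: "(\<Sum>i=1..m. of_nat i * q^i) = (q - of_nat (m+1) * q^(m+1) + of_nat m * q^(m+2))/(1-q)^2"
    using sum_ipow[of q m] q1 by (simp add: field_simps)
  have s2: "(\<Sum>i=1..m. of_nat i * inverse q^i) = (inverse q - of_nat (m+1) * inverse q^(m+1) + of_nat m * inverse q^(m+2))/(1-inverse q)^2"
    using sum_ipow[of "inverse q" m] q1 by (simp add: field_simps)
  have s: "(\<Sum>i=1..4*n-6. of_nat i * (q^i + q^(8*n-6-i))) =
     (\<Sum>i=1..m. of_nat i * q^i) + q^(8*n-6) * (\<Sum>i=1..m. of_nat i * inverse q^i)"
  proof -
    have "(\<Sum>i=1..4*n-6. of_nat i * (q^i + q^(8*n-6-i))) = (\<Sum>i=1..m. of_nat i * q^i + q^(8*n-6) * (of_nat i * inverse q^i))"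
    proof (rule sum.cong)
      fix i assume "i \<in> {1..m}"
      hence "i \<le> 8*n-6" by (auto simp: m_def)
      hence "q^(8*n-6-i) = q^(8*n-6) / q^i" by (rule pow_diff'[OF assms(1)])
      hence "q^(8*n-6-i) = q^(8*n-6) * inverse q^i" by (simp only: divide_inverse power_inverse)
      thus "of_nat i * (q^i + q^(8*n-6-i)) = of_nat i * q^i + q^(8*n-6) * (of_nat i * inverse q^i)"
        by (simp add: algebra_simps)
    qed (simp add: m_def)
    thus ?thesis by (simp add: sum.distrib sum_distrib_left)
  qed
  have e: "m+1 = 4*n-5" "m+2 = 4*n-4" using assms(4) by (auto simp: m_def)
  have p0: "q^(4*n-k) = X/q^k" if "k \<le> 4*n" for k using pow_diff'[OF assms(1) that] by (simp add: X_def)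
  have p0': "q^(8*n-k) = X^2/q^k" if "k \<le> 8*n" for k using pow_diff'[OF assms(1) that] by (simp add: X2)
  have p1a: "q^(m+1) = X/q^5" "q^(m+2) = X/q^4" "inverse q^(m+1) = q^5/X" "inverse q^(m+2) = q^4/X"
    unfolding e power_inverse using assms(4) by (simp_all add: p0)
  have p1: "q^(8*n-6) = X^2/q^6" "q^(8*n-5) = X^2/q^5" "q^(4*n-1) = X/q" "q^(4*n-2) = X/q^2" "q^(4*n-3) = X/q^3"
    "q^(4*n-4) = X/q^4" "q^(4*n-5) = X/q^5"
    using assms(4) by (simp_all add: e p0 p0' power_inverse)
  have n1: "of_nat (m+1) = 4*N-5" "of_nat m = 4*N-6" "of_nat (8*n-10) = 8*N-10" "of_nat (8*n-11) = 8*N-11"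
     "of_nat (8*n-8) = (8*N-8::'a)"
    using assms(4) by (simp_all add: e m_def N_def of_nat_diff)
  have "fpoly n a q = 2 + 2*((q - (4*N-5)*(X/q^5) + (4*N-6)*(X/q^4))/(1-q)^2
        + X^2/q^6 * ((inverse q - (4*N-5)*(q^5/X) + (4*N-6)*(q^4/X))/(1-inverse q)^2))
     - (a^2+1)*(X^2/q^5 - 2*(X/q) + 2*(X/q^2) - 2*(X/q^3) + q)/(a*(q-1)^2)
     + (8*N-10)*(X/q^4)*(1+q^2) + (8*N-11)*(X/q^5)*(1+q^4) + (8*N-8)*(X/q^3) + 2*(X^2/q^6)"
    unfolding fpoly_def s s1 s2 p1a p1 n1 by (simp add: m_def)
  also have "\<dots> = Gp q a X N / (a*q^6*(1-q)^2)" using fpoly_alg assms X0 by blast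
  finally show ?thesis by (simp add: X_def N_def)
qed



definition Dd :: "'a::field \<Rightarrow> 'a \<Rightarrow> 'a" where "Dd q a = a*q^6*(1-q)^2"
definition tt :: "'a::field \<Rightarrow> 'a \<Rightarrow> 'a \<Rightarrow> 'a" where
 "tt q a X = X*(q*q-X*X)*(q-X)^2*(1-q*q)*(a*q*q-1)*(a-q*q)*(q*q-a)*(1-a*q*q)*q^5/(q^8*(1-X)^2*(a-X)*(1-a*X)*Dd q a)"
definition rr :: "'a::field \<Rightarrow> 'a \<Rightarrow> 'a \<Rightarrow> 'a" where
 "rr q a X = (q*q-X)^2*(a*q*q-X)*(q*q-a*X)/(q^8*(1-X)^2*(a-X)*(1-a*X))"

lemma core:
  fixes q a X N :: "'a::field"
  shows "(q*q-X)^2*(a*q*q-X)*(q*q-a*X)*Gp q a (X*q^4) (N+1)-q^8*(1-X)^2*(a-X)*(1-a*X)*Gp q a X N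
   = X*(q*q-X*X)*(q-X)^2*(1-q*q)*(a*q*q-1)*(a-q*q)*(q*q-a)*(1-a*q*q)*q^5"
  unfolding Gp_def by algebra

lemma step_alg:
  fixes q a X N :: "'a::field"
  assumes "q \<noteq> 0" "a \<noteq> 0" "1 - q \<noteq> 0" "1 - X \<noteq> 0" "a - X \<noteq> 0" "1 - a*X \<noteq> 0"
  shows "Gp q a X N / Dd q a + tt q a X = rr q a X * (Gp q a (X*q^4) (N+1) / Dd q a)"
proof -
  define K where "K = q^8*(1-X)^2*(a-X)*(1-a*X)"
  define P1 where "P1 = (q*q-X)^2*(a*q*q-X)*(q*q-a*X)"
  define G where "G = Gp q a X N"
  define G' where "G' = Gp q a (X*q^4) (N+1)"
  define R where "R = X*(q*q-X*X)*(q-X)^2*(1-q*q)*(a*q*q-1)*(a-q*q)*(q*q-a)*(1-a*q*q)*q^5"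
  have K0: "K \<noteq> 0" using assms by (auto simp: K_def)
  have c: "P1*G' - K*G = R" unfolding P1_def G'_def K_def G_def R_def by (rule core)
  have 1: "rr q a X * (G' / Dd q a) = (P1*G')/(K*Dd q a)" unfolding rr_def P1_def K_def by simp
  have 2: "G / Dd q a = (K*G)/(K*Dd q a)" using K0 by simp
  have 3: "tt q a X = R/(K*Dd q a)" unfolding tt_def R_def K_def by simp
  have "rr q a X * (G' / Dd q a) = (K*G)/(K*Dd q a) + R/(K*Dd q a)"
    unfolding 1 c[symmetric] by (simp add: diff_divide_distrib)
  thus ?thesis unfolding 2[symmetric] 3[symmetric] G_def G'_def using K0 by simp
qed




definition PP :: "'a::field \<Rightarrow> 'a \<Rightarrow> nat \<Rightarrow> 'a" where
"PP q a n = q * (q ^ (2 * n) + 1)^2 * (qint (q^2) (int n))^2 * (qbinom (q^2) (2 * n) n)^2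
           * ((1 - inverse (q^2))^2 * qpoch (q^6 / a) (q^4) (n - 2) * qpoch (a * q^6) (q^4) (n - 2))
           / ((1 - q ^ (4 * n - 2))^2 * (qpoch (- (q^2)) (q^2) n)^4 * qpoch (a * q^4) (q^4) (n - 1)
              * qpoch (q^4 / a) (q^4) (n - 1))"

lemma rearr5: "(q::'a::field)*(f1*r1)*(f2*r2)*(f3*r3)*(f4*r4)/(f5*r5) = (q*f1*f2*f3*f4/f5) * (r1*r2*r3*r4/r5)"
  by (simp add: divide_inverse mult_ac)

lemma qpoch_nz: "(\<And>i. i < k \<Longrightarrow> 1 - x*q^i \<noteq> 0) \<Longrightarrow> qpoch x q k \<noteq> (0::'a::field)"
  unfolding qpoch_def by (simp add: prod_zero_iff)

lemma comb5: "(n1/d1)*(n2/d2)*(n3/d3)*(n4/d4)/(n5/d5) = (n1*n2*n3*n4*d5)/(d1*d2*d3*d4*(n5::'a::field))"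
  by (simp add: divide_inverse mult_ac inverse_mult_distrib)

lemma rho_PP:
  fixes q a Y :: "'a::field"
  assumes "q \<noteq> 0" "a \<noteq> 0" "1-q^2*Y \<noteq> 0" "1+q^2*Y \<noteq> 0" "Y+1 \<noteq> 0" "1 - Y \<noteq> 0"
   "1-a*Y^2 \<noteq> 0" "a-Y^2 \<noteq> 0" "q^2-Y^2 \<noteq> 0" "1-q^2*Y^2 \<noteq> 0" "1 - Y^2 \<noteq> 0"
  shows "((q^2*Y+1)^2/(Y+1)^2) * ((1-q^2*Y)^2/(1-Y)^2) * (((1-q^2*Y^2)*(1-q^4*Y^2))^2/((1-q^2*Y)^2)^2)
     * ((a*q^2-Y^2)*(q^2-a*Y^2)/(a*q^4)) / ((1-q^2*Y^2)^2*q^4*(1+q^2*Y)^4*(1-a*Y^2)*(a-Y^2)/((q^2-Y^2)^2*a))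
   = rr q a (Y^2)"
  unfolding comb5 rr_def
  apply (subst frac_eq_eq)
  using assms apply simp
  using assms apply simp
  apply algebra
  done




locale qa =
  fixes q a :: "'a::field_char_0"
  assumes q0: "q \<noteq> 0" and qm: "\<And>m::nat. m \<ge> 1 \<Longrightarrow> q ^ m \<noteq> 1"
    and a0: "a \<noteq> 0" and aq: "\<And>j::nat. a \<noteq> q ^ j" and aq': "\<And>j::nat. a * q ^ j \<noteq> 1"
begin

lemma nz1: "m \<ge> 1 \<Longrightarrow> 1 - q^m \<noteq> 0" using qm by force
lemma nzp: "m \<ge> 1 \<Longrightarrow> 1 + q^m \<noteq> 0"
proof
  assume "m \<ge> 1" "1 + q^m = 0"
  hence "q^m = -1" by (simp add: algebra_simps eq_neg_iff_add_eq_0)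
  hence "q^(2*m) = 1" by (simp add: power_mult mult.commute[of 2])
  thus False using qm[of "2*m"] \<open>m \<ge> 1\<close> by simp
qed
lemma nza: "1 - a*q^j \<noteq> 0" using aq'[of j] by simp
lemma nza': "1 - q^j/a \<noteq> 0" using aq[of j] a0 by (auto simp: field_simps)
lemma nza'': "a - q^j \<noteq> 0" using aq[of j] by simp

lemma PP_Suc:
  assumes n: "n \<ge> 2"
  shows "PP q a (Suc n) = PP q a n * rr q a (q^(4*n))"
proof -
  define Y where "Y = q^(2*n)"
  have XY: "q^(4*n) = Y^2" unfolding Y_def by (simp add: power_mult[symmetric] mult.commute)
  have Yq: "(q^2)^n = Y" "(q^2)^(2*n) = Y^2" "(q^4)^n = Y^2" unfolding Y_def
    by (simp_all add: power_mult[symmetric] mult.commute mult.left_commute)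
  have n1: "1 - Y \<noteq> 0" "1 + Y \<noteq> 0" "Y + 1 \<noteq> 0" "1 - q^2*Y \<noteq> 0" "1+q^2*Y \<noteq> 0"
     "1 - Y^2 \<noteq> 0" "1 - q^2 \<noteq> 0" "1 - q^2*Y^2 \<noteq> 0" "1 - q^4*Y^2 \<noteq> 0" "q^2 - Y^2 \<noteq> 0"
     "1 - a*Y^2 \<noteq> 0" "a - Y^2 \<noteq> 0" "1 - Y^2/q^2 \<noteq> 0" "1 - Y^2/a \<noteq> 0"
  proof -
    have n0: "n \<ge> 1" using n by simp
    show "1 - Y \<noteq> 0" "1 + Y \<noteq> 0" "Y + 1 \<noteq> 0" unfolding Y_def using nz1[of "2*n"] nzp[of "2*n"] n0 by (simp_all add: add.commute)
    show "1 - q^2*Y \<noteq> 0" "1+q^2*Y \<noteq> 0" unfolding Y_def using nz1[of "2+2*n"] nzp[of "2+2*n"] by (simp_all add: power_add power2_eq_square mult.assoc)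
    show "1 - Y^2 \<noteq> 0" using nz1[of "4*n"] n0 XY by simp
    show "1 - q^2 \<noteq> 0" using nz1[of 2] by simp
    show "1 - q^2*Y^2 \<noteq> 0" using nz1[of "2+4*n"] XY by (simp add: power_add power2_eq_square mult.assoc)
    show "1 - q^4*Y^2 \<noteq> 0" using nz1[of "4+4*n"] XY by (simp add: power_add power2_eq_square mult.assoc)
    have "4*n = (4*n-2)+2" using n by simp
    hence "q^(4*n) = q^(4*n-2)*q^2" by (metis power_add)
    hence "q^2 - Y^2 = q^2*(1 - q^(4*n-2))" using XY by (simp add: algebra_simps)
    thus "q^2 - Y^2 \<noteq> 0" using nz1[of "4*n-2"] n q0 by simp
    thus "1 - Y^2/q^2 \<noteq> 0" using q0 by (simp add: field_simps)
    show "1 - a*Y^2 \<noteq> 0" "a - Y^2 \<noteq> 0" "1 - Y^2/a \<noteq> 0" using nza[of "4*n"] nza''[of "4*n"] nza'[of "4*n"] XY by simp_all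
  qed
  have qp2: "qpoch (q^2) (q^2) n \<noteq> 0"
    by (rule qpoch_nz) (use nz1[of "2*i+2" for i] in \<open>simp add: power_mult[symmetric] power_add[symmetric] mult.commute add.commute\<close>)
  have qp3: "qpoch (-(q^2)) (q^2) n \<noteq> 0"
    by (rule qpoch_nz) (use nzp[of "2*i+2" for i] in \<open>simp add: power_mult[symmetric] power_add[symmetric] mult.commute add.commute\<close>)
  have qp4: "qpoch (a*q^4) (q^4) (n-1) \<noteq> 0"
    by (rule qpoch_nz) (use nza[of "4*i+4" for i] in \<open>simp add: power_mult[symmetric] power_add[symmetric] mult.commute add.commute mult.assoc\<close>)
  have qp5: "qpoch (q^4/a) (q^4) (n-1) \<noteq> 0"
    by (rule qpoch_nz) (use nza'[of "4*i+4" for i] in \<open>simp add: power_mult[symmetric] power_add[symmetric] mult.commute add.commute\<close>)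
  have Ysuc: "(q^2)^(Suc n) = q^2*Y" using Yq by simp
  have Ysuc2: "(q^2)^(Suc (2*n)) = q^2*Y^2" using Yq by simp
  have e1: "(q ^ (2 * Suc n) + 1)^2 = (q ^ (2 * n) + 1)^2 * ((q^2*Y+1)^2/(Y+1)^2)"
  proof -
    have c: "q^(2*Suc n) = q^2*Y" by (simp add: Y_def power_add power2_eq_square mult.assoc)
    show ?thesis unfolding c Y_def[symmetric] using n1 by simp
  qed
  have e2: "(qint (q^2) (int (Suc n)))^2 = (qint (q^2) (int n))^2 * ((1-q^2*Y)^2/(1-Y)^2)"
    unfolding qint_def power_int_of_nat Ysuc Yq using n1 by (simp add: power_divide)
  have e3: "(qbinom (q^2) (2 * Suc n) (Suc n))^2 = (qbinom (q^2) (2 * n) n)^2 * (((1-q^2*Y^2)*(1-q^4*Y^2))^2/((1-q^2*Y)^2)^2)"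
  proof -
    have a1: "2 * Suc n = Suc (Suc (2*n))" "2 * Suc n - Suc n = Suc n" "2*n - n = n" by simp_all
    have a2: "q^2*(q^2*Y^2) = q^4*Y^2" by (simp add: power_add[symmetric])
    define B where "B = qpoch (q^2) (q^2) (2*n)"
    define C where "C = qpoch (q^2) (q^2) n"
    have "qbinom (q^2) (2 * Suc n) (Suc n) = B*(1-q^2*Y^2)*(1-q^4*Y^2) / ((C*(1-q^2*Y))*(C*(1-q^2*Y)))"
      unfolding qbinom_def a1 qpoch_Suc Yq Ysuc2 a2 B_def[symmetric] C_def[symmetric] by (simp add: qpoch_Suc Yq C_def[symmetric])
    moreover have "qbinom (q^2) (2 * n) n = B/(C*C)" unfolding qbinom_def B_def C_def by (simp add: a1)
    ultimately show ?thesis by (simp add: power_mult_distrib power_divide mult_ac)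
  qed
  have e4: "(1 - inverse (q^2))^2 * qpoch (q^6 / a) (q^4) (Suc n - 2) * qpoch (a * q^6) (q^4) (Suc n - 2)
     = (1 - inverse (q^2))^2 * qpoch (q^6 / a) (q^4) (n - 2) * qpoch (a * q^6) (q^4) (n - 2) * ((a*q^2-Y^2)*(q^2-a*Y^2)/(a*q^4))"
  proof -
    have s: "Suc n - 2 = Suc (n-2)" using n by simp
    have p: "(q^4)^(n-2) = Y^2/q^8"
    proof -
      have "(q^4)^(n-2) * q^8 = (q^4)^(n-2+2)" by (simp add: power_add)
      also have "\<dots> = Y^2" using n Yq by (metis le_add_diff_inverse2 one_le_numeral le_trans)
      finally show ?thesis using q0 by (simp add: field_simps)
    qed
    have f: "(1 - q^6/a*(Y^2/q^8)) * (1 - a*q^6*(Y^2/q^8)) = (a*q^2-Y^2)*(q^2-a*Y^2)/(a*q^4)"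
      using q0 a0 by (simp add: field_simps)
    show ?thesis unfolding s qpoch_Suc p f[symmetric] by (simp add: mult_ac)
  qed
  have e5: "(1 - q ^ (4 * Suc n - 2))^2 * (qpoch (- (q^2)) (q^2) (Suc n))^4 * qpoch (a * q^4) (q^4) (Suc n - 1)
              * qpoch (q^4 / a) (q^4) (Suc n - 1)
     = (1 - q ^ (4 * n - 2))^2 * (qpoch (- (q^2)) (q^2) n)^4 * qpoch (a * q^4) (q^4) (n - 1)
              * qpoch (q^4 / a) (q^4) (n - 1) * ((1-q^2*Y^2)^2*q^4*(1+q^2*Y)^4*(1-a*Y^2)*(a-Y^2)/((q^2-Y^2)^2*a))"
  proof -
    have s: "Suc n - 1 = Suc (n-1)" using n by simp
    have p: "(q^4)^(n-1) = Y^2/q^4"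
    proof -
      have "(q^4)^(n-1) * q^4 = (q^4)^(n-1+1)" by (simp add: power_add)
      also have "\<dots> = Y^2" using n Yq by (metis le_add_diff_inverse2 one_le_numeral le_trans)
      finally show ?thesis using q0 by (simp add: field_simps)
    qed
    have c1: "q ^ (4 * Suc n - 2) = q^2*Y^2" using XY by (simp add: power_add power2_eq_square mult.assoc)
    have c2: "q ^ (4 * n - 2) = Y^2/q^2"
    proof -
      have "4*n-2+2 = 4*n" using n by simp
      hence "q^(4*n-2) * q^2 = Y^2" using XY by (metis power_add)
      thus ?thesis using q0 by (simp add: field_simps)
    qed
    have f1: "1 - - (q^2) * Y = 1 + q^2*Y" by simp
    have f2: "1 - a*q^4*(Y^2/q^4) = 1 - a*Y^2" using q0 by simp
    have f3: "1 - q^4/a*(Y^2/q^4) = (a-Y^2)/a" using q0 a0 by (simp add: field_simps)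
    have f4: "(1 - Y^2/q^2)^2 = (q^2-Y^2)^2/q^4"
    proof -
      have "1 - Y^2/q^2 = (q^2-Y^2)/q^2" using q0 by (simp add: field_simps)
      thus ?thesis by (simp add: power_divide power_mult[symmetric])
    qed
    have f5: "(1-q^2*Y^2)^2 = (q^2-Y^2)^2/q^4 * ((1-q^2*Y^2)^2*q^4/(q^2-Y^2)^2)"
      using q0 n1 by simp
    show ?thesis unfolding s qpoch_Suc p c1 c2 Yq f1 f2 f3 f4
      by (subst f5) (simp add: mult_ac power_mult_distrib divide_inverse)
  qed
  have "PP q a (Suc n) = PP q a n * (((q^2*Y+1)^2/(Y+1)^2) * ((1-q^2*Y)^2/(1-Y)^2) * (((1-q^2*Y^2)*(1-q^4*Y^2))^2/((1-q^2*Y)^2)^2)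
     * ((a*q^2-Y^2)*(q^2-a*Y^2)/(a*q^4)) / ((1-q^2*Y^2)^2*q^4*(1+q^2*Y)^4*(1-a*Y^2)*(a-Y^2)/((q^2-Y^2)^2*a)))"
    unfolding PP_def e1 e2 e3 e4 e5 by (rule rearr5)
  also have "\<dots> = PP q a n * rr q a (q^(4*n))" unfolding XY
    by (subst rho_PP) (use q0 a0 n1 in auto)
  finally show ?thesis .
qed

end



definition sg :: "'a::field \<Rightarrow> 'a \<Rightarrow> 'a \<Rightarrow> 'a" where
 "sg q a X = (1-q^6*X^2)*(1-q^3*X)^2*(q*q-X)^2*(a*q*q-X)*(q*q-a*X)/((q*q-X*X)*(q-X)^2*(1-q^4*X)^2*(a-q^4*X)*(1-a*q^4*X))"

lemma sig_alg:
  fixes q a X :: "'a::field"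
  assumes "q \<noteq> 0" "a \<noteq> 0" "1-q \<noteq> 0" "1-X \<noteq> 0" "a-X \<noteq> 0" "1-a*X \<noteq> 0" "q*q-X*X \<noteq> 0" "q-X \<noteq> 0"
    "1-q^4*X \<noteq> 0" "a-q^4*X \<noteq> 0" "1-a*q^4*X \<noteq> 0"
  shows "tt q a X * sg q a X = rr q a X * tt q a (X*q^4)"
proof -
  have r1: "q*q-(X*q^4)*(X*q^4) = q^2*(1-q^6*X^2)" by algebra
  have r2: "q-X*q^4 = q*(1-q^3*X)" by algebra
  have r3: "1-X*q^4 = 1-q^4*X" "a-X*q^4 = a-q^4*X" "1-a*(X*q^4) = 1-a*q^4*X" by (simp_all add: mult_ac)
  define K0 where "K0 = (1-q*q)*(a*q*q-1)*(a-q*q)*(q*q-a)*(1-a*q*q)*q^5"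
  define A where "A = q*q-X*X"
  define B where "B = q-X"
  define C where "C = 1-q^6*X^2"
  define E where "E = 1-q^3*X"
  define F where "F = q*q-X"
  define G where "G = a*q*q-X"
  define H where "H = q*q-a*X"
  define I where "I = 1-X"
  define J where "J = a-X"
  define L where "L = 1-a*X"
  define M where "M = 1-q^4*X"
  define N where "N = a-q^4*X"
  define Wz where "Wz = 1-a*q^4*X"
  define Dv where "Dv = Dd q a"
  have nz: "A \<noteq> 0" "B \<noteq> 0" "I \<noteq> 0" "J \<noteq> 0" "L \<noteq> 0" "M \<noteq> 0" "N \<noteq> 0" "Wz \<noteq> 0" "Dv \<noteq> 0"
    using assms by (simp_all add: A_def B_def I_def J_def L_def M_def N_def Wz_def Dv_def Dd_def)
  have t1: "tt q a X = X*A*B^2*K0/(q^8*I^2*J*L*Dv)"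
    unfolding tt_def K0_def A_def B_def I_def J_def L_def Dv_def by (simp add: mult_ac)
  have t2: "tt q a (X*q^4) = X*q^4*(q^2*C)*(q*E)^2*K0/(q^8*M^2*N*Wz*Dv)"
    unfolding tt_def r1 r2 r3 K0_def C_def E_def M_def N_def Wz_def Dv_def by (simp add: mult_ac)
  have t3: "rr q a X = F^2*G*H/(q^8*I^2*J*L)" unfolding rr_def F_def G_def H_def I_def J_def L_def by simp
  have t4: "sg q a X = C*E^2*F^2*G*H/(A*B^2*M^2*N*Wz)"
    unfolding sg_def C_def E_def F_def G_def H_def A_def B_def M_def N_def Wz_def by simp
  show ?thesis unfolding t1 t2 t3 t4 using nz assms(1)
    by (simp add: field_simps)
qed




definition TT :: "'a::field \<Rightarrow> 'a \<Rightarrow> nat \<Rightarrow> 'a" where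
"TT q a k = qint (q^2) (4 * int k - 1) * (qint q (4 * int k - 1))^2
            * (qpoch (inverse (q^2)) (q^4) k)^2 * qpoch (inverse (q^2) / a) (q^4) k
            * qpoch (a * inverse (q^2)) (q^4) k
            / ((qpoch (q^4) (q^4) k)^2 * qpoch (q^4 / a) (q^4) k * qpoch (a * q^4) (q^4) k)
            * q ^ (4 * k)"

context qa begin

lemma TT_Suc:
  assumes n: "n \<ge> 1"
  shows "TT q a (Suc n) = TT q a n * sg q a (q^(4*n))"
proof -
  define X where "X = q^(4*n)"
  have X0: "X \<noteq> 0" using q0 by (simp add: X_def)
  have i1: "4 * int (Suc n) - 1 = int (4*n+3)" "4 * int n - 1 = int (4*n-1)" using n by auto
  have w1: "(q^2)^(4*n+3) = q^6*X^2"
  proof -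
    have "(q^2)^(4*n+3) = q^(2*(4*n+3))" by (simp only: power_mult)
    also have "2*(4*n+3) = 6 + 4*n + 4*n" by simp
    finally show ?thesis unfolding X_def by (simp only: power_add power2_eq_square mult.assoc)
  qed
  have w2: "(q^2)^(4*n-1) = X^2/q^2"
  proof -
    have "4*n-1+1 = 4*n" using n by simp
    hence "(q^2)^(4*n-1) * q^2 = X^2" unfolding X_def by (metis power_add power_mult power_one_right mult.commute power2_eq_square)
    thus ?thesis using q0 by (simp add: field_simps)
  qed
  have w3: "q^(4*n+3) = q^3*X" unfolding X_def by (simp add: power_add mult_ac)
  have w4: "q^(4*n-1) = X/q"
  proof -
    have "4*n-1+1 = 4*n" using n by simp
    hence "q^(4*n-1) * q = X" unfolding X_def by (metis power_Suc2 Suc_eq_plus1)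
    thus ?thesis using q0 by (simp add: field_simps)
  qed
  have w5: "(q^4)^n = X" "q^(4*Suc n) = X*q^4" unfolding X_def by (simp_all add: power_mult[symmetric] power_add mult_ac)
  define N1 where "N1 = qpoch (inverse (q^2)) (q^4) n"
  define N2 where "N2 = qpoch (inverse (q^2) / a) (q^4) n"
  define N3 where "N3 = qpoch (a * inverse (q^2)) (q^4) n"
  define D1 where "D1 = qpoch (q^4) (q^4) n"
  define D2 where "D2 = qpoch (q^4 / a) (q^4) n"
  define D3 where "D3 = qpoch (a * q^4) (q^4) n"
  have TS: "TT q a (Suc n) = (1-q^6*X^2)/(1-q^2) * ((1-q^3*X)/(1-q))^2 * (N1*(1-inverse(q^2)*X))^2
      * (N2*(1-inverse(q^2)/a*X)) * (N3*(1-a*inverse(q^2)*X))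
      / ((D1*(1-q^4*X))^2*(D2*(1-q^4/a*X))*(D3*(1-a*q^4*X))) * (X*q^4)"
    unfolding TT_def qint_def i1 power_int_of_nat w1 w3 qpoch_Suc w5
      N1_def[symmetric] N2_def[symmetric] N3_def[symmetric] D1_def[symmetric] D2_def[symmetric] D3_def[symmetric]
    by simp
  have TN: "TT q a n = (1-X^2/q^2)/(1-q^2) * ((1-X/q)/(1-q))^2 * N1^2*N2*N3/(D1^2*D2*D3) * X"
    unfolding TT_def qint_def i1 power_int_of_nat w2 w4 X_def[symmetric]
      N1_def[symmetric] N2_def[symmetric] N3_def[symmetric] D1_def[symmetric] D2_def[symmetric] D3_def[symmetric]
    by simp
  have nD1: "D1 \<noteq> 0" unfolding D1_def
    by (rule qpoch_nz) (use nz1[of "4*i+4" for i] in \<open>simp add: power_mult[symmetric] power_add[symmetric] mult.commute add.commute\<close>)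
  have nD2: "D2 \<noteq> 0" unfolding D2_def
    by (rule qpoch_nz) (use nza'[of "4*i+4" for i] in \<open>simp add: power_mult[symmetric] power_add[symmetric] mult.commute add.commute\<close>)
  have nD3: "D3 \<noteq> 0" unfolding D3_def
    by (rule qpoch_nz) (use nza[of "4*i+4" for i] in \<open>simp add: power_mult[symmetric] power_add[symmetric] mult.commute add.commute mult.assoc\<close>)
  define A where "A = q*q-X*X"
  define B where "B = q-X"
  define C where "C = 1-q^6*X^2"
  define E where "E = 1-q^3*X"
  define F where "F = q*q-X"
  define G where "G = a*q*q-X"
  define H where "H = q*q-a*X"
  define M where "M = 1-q^4*X"
  define N where "N = a-q^4*X"
  define Wz where "Wz = 1-a*q^4*X"
  have nA: "A \<noteq> 0"
  proof -
    have "4*n-1+1 = 4*n" using n by simp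
    hence "q^(4*n-1) * q = X" unfolding X_def by (metis power_Suc2 Suc_eq_plus1)
    have "8*n-2+2 = 8*n" using n by simp
    hence e: "q^(8*n-2) * q^2 = X*X" unfolding X_def by (metis power_add mult_2 power_mult mult.commute power2_eq_square numeral_Bit0)
    have "A = q^2*(1-q^(8*n-2))" unfolding A_def e[symmetric] by (simp add: algebra_simps power2_eq_square)
    thus ?thesis using q0 nz1[of "8*n-2"] n by simp
  qed
  have nB: "B \<noteq> 0"
  proof -
    have "4*n-1+1 = 4*n" using n by simp
    hence e: "q^(4*n-1) * q = X" unfolding X_def by (metis power_Suc2 Suc_eq_plus1)
    have "B = q*(1-q^(4*n-1))" unfolding B_def e[symmetric] by (simp add: algebra_simps)
    thus ?thesis using q0 nz1[of "4*n-1"] n by simp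
  qed
  have nM: "M \<noteq> 0" unfolding M_def X_def using nz1[of "4+4*n"] by (simp add: power_add)
  have nN: "N \<noteq> 0" unfolding N_def X_def using nza''[of "4+4*n"] by (simp add: power_add)
  have nW: "Wz \<noteq> 0" unfolding Wz_def X_def using nza[of "4+4*n"] by (simp add: power_add mult.assoc)
  have nq: "1 - q^2 \<noteq> 0" "1 - q \<noteq> 0" using nz1[of 2] nz1[of 1] by auto
  have r: "1-inverse(q^2)*X = F/q^2" "1-inverse(q^2)/a*X = G/(a*q^2)" "1-a*inverse(q^2)*X = H/q^2"
     "1-q^4/a*X = N/a" "1-X^2/q^2 = A/q^2" "1-X/q = B/q" "1-q^6*X^2 = C" "1-q^3*X = E" "1-q^4*X = M" "1-a*q^4*X = Wz"
    unfolding F_def G_def H_def N_def A_def B_def C_def E_def M_def Wz_def using q0 a0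
    by (simp_all add: field_simps power2_eq_square)
  have sgX: "sg q a X = C*E^2*F^2*G*H/(A*B^2*M^2*N*Wz)"
    unfolding sg_def C_def E_def F_def G_def H_def A_def B_def M_def N_def Wz_def by simp
  define Q1 where "Q1 = 1 - q^2"
  define Q2 where "Q2 = 1 - q"
  have nQ: "Q1 \<noteq> 0" "Q2 \<noteq> 0" using nq by (simp_all add: Q1_def Q2_def)
  have "TT q a (Suc n) = TT q a n * sg q a X"
    unfolding TS TN r sgX Q1_def[symmetric] Q2_def[symmetric] using q0 a0 nD1 nD2 nD3 nA nB nM nN nW nQ
    by (simp add: field_simps)
  thus ?thesis by (simp add: X_def)
qed
end



lemma qpoch_0: "qpoch x q 0 = 1" by (simp add: qpoch_def)

context qa begin

lemma TT0: "TT q a 0 = - 1/q^4"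
proof -
  have p: "(q^2) powi (-1) = inverse (q^2)" "q powi (-1) = inverse q" by (simp_all add: power_int_minus)
  define u where "u = 1 - q^2"
  define v where "v = 1 - q"
  have n: "u \<noteq> 0" "v \<noteq> 0" using nz1[of 2] nz1[of 1] by (auto simp: u_def v_def)
  have "TT q a 0 = (1 - inverse (q^2))/u * ((1 - inverse q)/v)^2" unfolding TT_def qint_def p u_def v_def
    by (simp add: qpoch_0)
  also have "\<dots> = - 1/q^4"
    apply (simp add: field_simps n q0)
    apply (simp only: u_def v_def)
    apply algebra
    done
  finally show ?thesis .
qed

lemma TT1: "TT q a 1 = (1-q^6)*(1-q^3)^2*(q*q-1)^2*(a*q*q-1)*(q*q-a)/((1-q*q)*(1-q)^2*q^4*(1-q^4)^2*(a-q^4)*(1-a*q^4))"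
proof -
  have i: "4 * int 1 - 1 = int 3" by simp
  define u where "u = 1 - q^2"
  define v where "v = 1 - q"
  define w where "w = 1 - q^4"
  define x where "x = a - q^4"
  define y where "y = 1 - a*q^4"
  have n: "u \<noteq> 0" "v \<noteq> 0" "w \<noteq> 0" "x \<noteq> 0" "y \<noteq> 0"
    using nz1[of 2] nz1[of 1] nz1[of 4] nza''[of 4] nza[of 4] by (auto simp: u_def v_def w_def x_def y_def)
  have e: "1 - q^4/a = x/a" "1 - inverse (q^2)/a = (a*q*q-1)/(a*q*q)" "1 - a*inverse(q^2) = (q*q-a)/(q*q)"
    "1 - inverse(q^2) = (q*q-1)/(q*q)" "(q^2)^3 = q^6" "1 - q*q = u" using q0 a0 by (simp_all add: field_simps power2_eq_square x_def u_def)
  have "TT q a 1 = (1-q^6)/u * ((1-q^3)/v)^2 * ((q*q-1)/(q*q))^2 * ((a*q*q-1)/(a*q*q)) * ((q*q-a)/(q*q))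
      / (w^2 * (x/a) * y) * q^4"
    unfolding TT_def qint_def i power_int_of_nat qpoch_def by (simp add: e u_def[symmetric] v_def[symmetric] w_def[symmetric] y_def[symmetric])
  also have "\<dots> = (1-q^6)*(1-q^3)^2*(q*q-1)^2*(a*q*q-1)*(q*q-a)/(u*v^2*q^4*w^2*x*y)"
    apply (simp add: field_simps n q0 a0)
    apply algebra
    done
  finally show ?thesis by (simp add: u_def v_def w_def x_def y_def power2_eq_square)
qed

lemma qp2: "qpoch x q' 2 = (1-x)*(1-x*q')" by (simp add: qpoch_def numeral_eq_Suc)
lemma qp1: "qpoch x q' 1 = (1-x)" by (simp add: qpoch_def)
lemma qp4: "qpoch x q' 4 = (1-x)*(1-x*q')*(1-x*q'^2)*(1-x*q'^3)" by (simp add: qpoch_def numeral_eq_Suc)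

lemma PP2: "PP q a 2 = a*(q*q-1)^2/(q^3*(1-q^4)^2*(1-a*q^4)*(a-q^4))"
proof -
  define u where "u = 1 - q^2"
  define w where "w = 1 - q^4"
  define s6 where "s6 = 1 - q^6"
  define s8 where "s8 = 1 - q^8"
  define p2 where "p2 = 1 + q^2"
  define p4 where "p4 = 1 + q^4"
  define x where "x = a - q^4"
  define y where "y = 1 - a*q^4"
  have n: "u \<noteq> 0" "w \<noteq> 0" "s6 \<noteq> 0" "s8 \<noteq> 0" "p2 \<noteq> 0" "p4 \<noteq> 0" "x \<noteq> 0" "y \<noteq> 0"
    using nz1[of 2] nz1[of 4] nz1[of 6] nz1[of 8] nzp[of 2] nzp[of 4] nza''[of 4] nza[of 4]
    by (auto simp: u_def w_def s6_def s8_def p2_def p4_def x_def y_def)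
  have e: "1 - q^4/a = x/a" "(1 - (q^2)^2) = w" "1 - q^2*q^2 = w" "1 - q^2*(q^2)^2 = s6" "1 - q^2*(q^2)^3 = s8"
     "1 - - (q^2) = p2" "1 - - (q^2) * q^2 = p4" "1 - q^(4*2-2) = s6" "1 - a*q^4 = y" "1 - q^2 = u"
    using a0 by (simp_all add: field_simps x_def w_def s6_def s8_def p2_def p4_def y_def u_def flip: power_add power_mult)
  have f: "q^(2*2) = q^4" "qint (q^2) (int 2) = w/u" "qbinom (q^2) (2*2) 2 = (u*w*s6*s8)/((u*w)*(u*w))"
    "qpoch (q^6 / a) (q^4) (2 - 2) = 1" "qpoch (a*q^6) (q^4) (2 - 2) = 1" "1 - q^(4*2-2) = s6"
    "qpoch (- (q^2)) (q^2) 2 = p2*p4" "qpoch (a * q^4) (q^4) (2 - 1) = y" "qpoch (q^4 / a) (q^4) (2 - 1) = x/a"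
    unfolding qint_def qbinom_def power_int_of_nat
    using a0 by (simp_all add: diff_divide_distrib qp2 qp1 qp4 qpoch_0 qpoch_Suc u_def w_def s6_def s8_def p2_def p4_def x_def y_def flip: power_add power_mult)
  have "PP q a 2 = q*(q^4+1)^2*(w/u)^2*((u*w*s6*s8)/((u*w)*(u*w)))^2*((1-inverse(q^2))^2*1*1)/(s6^2*(p2*p4)^4*y*(x/a))"
    unfolding PP_def f ..
  also have "\<dots> = a*(q*q-1)^2/(q^3*(1-q^4)^2*(1-a*q^4)*(a-q^4))"
    unfolding x_def[symmetric] y_def[symmetric] w_def[symmetric]
    apply (simp add: field_simps n q0 a0)
    apply (simp only: u_def w_def s6_def s8_def p2_def p4_def x_def y_def)
    apply algebra
    done
  finally show ?thesis .
qed
end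


context qa begin

lemma key1: "TT q a 1 * rr q a (q^4) = PP q a 2 * tt q a (q^4)"
proof -
  have n: "1-q*q \<noteq> 0" "1-q \<noteq> 0" "1-q^4 \<noteq> 0" "a-q^4 \<noteq> 0" "1-a*q^4 \<noteq> 0"
    using nz1[of 2] nz1[of 1] nz1[of 4] nza''[of 4] nza[of 4] by (auto simp: power2_eq_square)
  show ?thesis
    unfolding TT1 PP2 rr_def tt_def Dd_def times_divide_times_eq
    apply (subst frac_eq_eq)
    using n q0 a0 apply simp
    using n q0 a0 apply simp
    apply algebra
    done
qed

lemma fracsum: "b \<noteq> 0 \<Longrightarrow> d \<noteq> 0 \<Longrightarrow> - 1/b + c/d = (c*b - d)/(b*(d::'a))"
  by (simp add: field_simps)

lemma baseM: "(\<Sum>k<2. TT q a k) = PP q a 2 * fpoly 2 a q"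
proof -
  have n: "1-q*q \<noteq> 0" "1-q \<noteq> 0" "1-q^4 \<noteq> 0" "a-q^4 \<noteq> 0" "1-a*q^4 \<noteq> 0"
    using nz1[of 2] nz1[of 1] nz1[of 4] nza''[of 4] nza[of 4] by (auto simp: power2_eq_square)
  have q1: "q \<noteq> 1" using nz1[of 1] by auto
  have s: "(\<Sum>k<2. TT q a k) = TT q a 0 + TT q a 1" by (simp add: numeral_2_eq_2)
  have f: "fpoly 2 a q = Gp q a (q^8) 2 / (a*q^6*(1-q)^2)"
    using fpoly_closed[OF q0 a0 q1, of 2] by (simp add: numeral_eq_Suc)
  show ?thesis
    unfolding s TT0 TT1 PP2 f
    apply (subst fracsum)
    using n q0 apply simp
    using n q0 apply simp
    unfolding times_divide_times_eq
    apply (subst frac_eq_eq)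
    using n q0 a0 apply simp
    using n q0 a0 apply simp
    unfolding Gp_def
    apply algebra
    done
qed

lemma Xfacts:
  assumes n: "n \<ge> 1"
  shows "1 - q^(4*n) \<noteq> 0" "a - q^(4*n) \<noteq> 0" "1 - a*q^(4*n) \<noteq> 0" "q*q - q^(4*n)*q^(4*n) \<noteq> 0"
    "q - q^(4*n) \<noteq> 0" "1 - q^4*q^(4*n) \<noteq> 0" "a - q^4*q^(4*n) \<noteq> 0" "1 - a*q^4*q^(4*n) \<noteq> 0"
proof -
  show "1 - q^(4*n) \<noteq> 0" using nz1[of "4*n"] n by simp
  show "a - q^(4*n) \<noteq> 0" by (rule nza'')
  show "1 - a*q^(4*n) \<noteq> 0" by (rule nza)
  show "1 - q^4*q^(4*n) \<noteq> 0" using nz1[of "4+4*n"] by (simp add: power_add)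
  show "a - q^4*q^(4*n) \<noteq> 0" using nza''[of "4+4*n"] by (simp add: power_add)
  show "1 - a*q^4*q^(4*n) \<noteq> 0" using nza[of "4+4*n"] by (simp add: power_add mult.assoc)
  have "8*n-2+2 = 4*n+4*n" using n by simp
  hence e: "q^(8*n-2) * q^2 = q^(4*n)*q^(4*n)" by (metis power_add)
  have "q*q - q^(4*n)*q^(4*n) = q^2*(1-q^(8*n-2))" unfolding e[symmetric] by (simp add: algebra_simps power2_eq_square)
  thus "q*q - q^(4*n)*q^(4*n) \<noteq> 0" using q0 nz1[of "8*n-2"] n by simp
  have "4*n-1+1 = 4*n" using n by simp
  hence e2: "q^(4*n-1) * q = q^(4*n)" by (metis power_Suc2 Suc_eq_plus1)
  have "q - q^(4*n) = q*(1-q^(4*n-1))" unfolding e2[symmetric] by (simp add: algebra_simps)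
  thus "q - q^(4*n) \<noteq> 0" using q0 nz1[of "4*n-1"] n by simp
qed

lemma sig_at:
  assumes n: "n \<ge> 1"
  shows "tt q a (q^(4*n)) * sg q a (q^(4*n)) = rr q a (q^(4*n)) * tt q a (q^(4*n)*q^4)"
  using Xfacts[OF n] nz1[of 1] by (intro sig_alg) (auto simp: q0 a0 mult.assoc)

lemma baseJ: "TT q a 2 = PP q a 2 * tt q a (q^(4*2))"
proof -
  have t: "TT q a 2 = TT q a 1 * sg q a (q^4)" using TT_Suc[of 1] by (simp add: numeral_2_eq_2)
  have s: "tt q a (q^4) * sg q a (q^4) = rr q a (q^4) * tt q a (q^4*q^4)" using sig_at[of 1] by simp
  have r0: "rr q a (q^4) \<noteq> 0"
  proof -
    have a: "q*q - q^4 = q^2*(1-q^2)" "a*q*q - q^4 = q^2*(a-q^2)" "q*q - a*q^4 = q^2*(1-a*q^2)"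
      by (simp_all add: algebra_simps power2_eq_square power_numeral_reduce)
    show ?thesis unfolding rr_def a using q0 nz1[of 2] nza''[of 2] nza[of 2] Xfacts[of 1]
      by simp
  qed
  have "PP q a 2 * tt q a (q^(4*2)) = PP q a 2 * tt q a (q^4*q^4)" by (simp flip: power_add)
  also have "\<dots> = PP q a 2 * tt q a (q^4) * sg q a (q^4) / rr q a (q^4)" using s r0
    by (simp add: field_simps)
  also have "\<dots> = TT q a 1 * rr q a (q^4) * sg q a (q^4) / rr q a (q^4)" using key1 by simp
  also have "\<dots> = TT q a 2" using r0 t by simp
  finally show ?thesis by simp
qed

lemma Jlem: "n \<ge> 2 \<Longrightarrow> TT q a n = PP q a n * tt q a (q^(4*n))"
proof (induction n rule: nat_induct_at_least)
  case base then show ?case by (rule baseJ)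
next
  case (Suc n)
  have "TT q a (Suc n) = TT q a n * sg q a (q^(4*n))" using TT_Suc[of n] Suc by simp
  also have "\<dots> = PP q a n * (tt q a (q^(4*n)) * sg q a (q^(4*n)))" using Suc by simp
  also have "\<dots> = PP q a n * rr q a (q^(4*n)) * tt q a (q^(4*n)*q^4)" using sig_at[of n] Suc by simp
  also have "\<dots> = PP q a (Suc n) * tt q a (q^(4*Suc n))" using PP_Suc[of n] Suc
    by (simp add: power_add mult_ac)
  finally show ?case .
qed

lemma Mlem: "n \<ge> 2 \<Longrightarrow> (\<Sum>k<n. TT q a k) = PP q a n * fpoly n a q"
proof (induction n rule: nat_induct_at_least)
  case base then show ?case by (rule baseM)
next
  case (Suc n)
  have q1: "q \<noteq> 1" "1 - q \<noteq> 0" using nz1[of 1] by auto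
  have nn: "n \<ge> 1" using Suc by simp
  have f1: "fpoly n a q = Gp q a (q^(4*n)) (of_nat n) / Dd q a"
    using fpoly_closed[OF q0 a0 q1(1) Suc(1)] by (simp add: Dd_def)
  have f2: "fpoly (Suc n) a q = Gp q a (q^(4*n)*q^4) (of_nat n + 1) / Dd q a"
    using fpoly_closed[OF q0 a0 q1(1), of "Suc n"] Suc(1) by (simp add: Dd_def power_add mult_ac add.commute)
  have st: "Gp q a (q^(4*n)) (of_nat n) / Dd q a + tt q a (q^(4*n)) = rr q a (q^(4*n)) * (Gp q a (q^(4*n)*q^4) (of_nat n + 1) / Dd q a)"
    using Xfacts[OF nn] q1 by (intro step_alg) (auto simp: q0 a0)
  have "(\<Sum>k<Suc n. TT q a k) = (\<Sum>k<n. TT q a k) + TT q a n" by simp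
  also have "\<dots> = PP q a n * (fpoly n a q + tt q a (q^(4*n)))" using Suc Jlem[OF Suc(1)] by (simp add: algebra_simps)
  also have "\<dots> = PP q a n * rr q a (q^(4*n)) * fpoly (Suc n) a q" unfolding f1 f2 st by simp
  also have "\<dots> = PP q a (Suc n) * fpoly (Suc n) a q" using PP_Suc[OF Suc(1)] by simp
  finally show ?case .
qed

end


lemma final_rearr: "x * (y * f) / d = (x * y / d) * (f::'a::field)"
  by (simp add: divide_inverse mult_ac)

theorem theorem3:
  fixes q a :: "'a::field_char_0" and n :: nat
  assumes "n > 1"
    and "q \<noteq> 0" and "\<And>m::nat. m \<ge> 1 \<Longrightarrow> q ^ m \<noteq> 1"
    and "a \<noteq> 0" and "\<And>j::nat. a \<noteq> q ^ j" and "\<And>j::nat. a * q ^ j \<noteq> 1"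
  shows "(\<Sum>k<n. qint (q^2) (4 * int k - 1) * (qint q (4 * int k - 1))^2
            * (qpoch (inverse (q^2)) (q^4) k)^2 * qpoch (inverse (q^2) / a) (q^4) k
            * qpoch (a * inverse (q^2)) (q^4) k
            / ((qpoch (q^4) (q^4) k)^2 * qpoch (q^4 / a) (q^4) k * qpoch (a * q^4) (q^4) k)
            * q ^ (4 * k))
       = q * (q ^ (2 * n) + 1)^2 * (qint (q^2) (int n))^2 * (qbinom (q^2) (2 * n) n)^2
           * ((1 - inverse (q^2))^2 * qpoch (q^6 / a) (q^4) (n - 2) * qpoch (a * q^6) (q^4) (n - 2)
              * fpoly n a q)
           / ((1 - q ^ (4 * n - 2))^2 * (qpoch (- (q^2)) (q^2) n)^4 * qpoch (a * q^4) (q^4) (n - 1)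
              * qpoch (q^4 / a) (q^4) (n - 1))"
proof -
  interpret qa q a using assms(2-6) by unfold_locales auto
  have "(\<Sum>k<n. TT q a k) = PP q a n * fpoly n a q" using Mlem assms(1) by simp
  thus ?thesis unfolding TT_def PP_def mult.assoc[symmetric] by (simp only: final_rearr mult.assoc)
qed

end
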